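(* Fix a positive integer $n$, a nonzero $n$-partition $\lambda$ with $\lambda_n=0$, an $n$-semistandard tableau $T$ of shape $\lambda$, and $1\le h\le d+1$. Then for every location $(j,i)\ge(\beta_h,1)$ (in reading order) at which $\pi^{(j,i)}$ is defined, we have $\pi^{(j,i)}_{\zeta_{h-1}+1}<\dots<\pi^{(j,i)}_{\zeta_h}$.
   Context: Identify $\lambda=(\lambda_1,\dots,\lambda_n)$ (weakly decreasing nonnegative integers, $\lambda_n=0$, $\lambda\ne0$) with its Young diagram; $c_j$ is the length of column $j$. Let $\zeta_1<\dots<\zeta_d$ be the distinct column lengths, $\zeta_0:=0$, $\zeta_{d+1}:=n$; for $1\le h\le d$ let $\beta_h$ be the index of the rightmost column of length $\zeta_h$, and $\beta_{d+1}:=1$. Write $(j,i)$ for the box in column $j$, row $i$. Reading order: $(l,k)\le(j,i)$ iff $l<j$, or $l=j$ and $k\ge i$; convention $(j,c_j+1)$ means $(j-1,1)$. An $n$-semistandard tableau $T$ of shape $\lambda$ has entries in $[n]$, weakly increasing along rows, strictly increasing down columns; $T(j,i)$ is its entry, $C_j$ its $j$-th column. Permutations are in one-line form. Greedy procedure: $\pi^{(1,1)}$ has first $c_1$ entries those of $C_1$ increasing, followed by the rest of $[n]$ increasing. For $(j,i)$ with $j\ge2$ in reading order from $(2,c_2)$ to $(\lambda_1,1)$, define $\pi^{(j,i)}$ from $\pi:=\pi^{(j,i+1)}$: if $T(j-1,i)=T(j,i)$ set $\pi^{(j,i)}=\pi$; otherwise let $i_0=i$, and given $i_{x-1}$ with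 $\pi_{i_{x-1}}<T(j,i)$ let $i_x$ be the smallest index $>c_j$ with $\pi_{i_{x-1}}<\pi_{i_x}\le T(j,i)$, stopping at $i_m$ with $\pi_{i_m}=T(j,i)$; set $\pi^{(j,i)}_{i_x}=\pi_{i_{x-1}}$ ($1\le x\le m$), $\pi^{(j,i)}_{i_0}=\pi_{i_m}$, others unchanged. Thus $\pi^{(j,i)}$ is defined at $(1,1)$ and at all $(j,i)$ with $j\ge2$. *)

theory Defs
  imports Main
begin

(* Partition lambda = (lam 1, ..., lam n), rows indexed 1..n *)
definition is_partition :: "nat \<Rightarrow> (nat \<Rightarrow> nat) \<Rightarrow> bool" where
  "is_partition n lam \<longleftrightarrow>
     (\<forall>i. 1 \<le> i \<longrightarrow> i < n \<longrightarrow> lam (Suc i) \<le> lam i) \<and>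
     lam n = 0 \<and> (\<exists>i\<in>{1..n}. lam i \<noteq> 0)"

definition col_len :: "nat \<Rightarrow> (nat \<Rightarrow> nat) \<Rightarrow> nat \<Rightarrow> nat" where
  "col_len n lam j = card {i\<in>{1..n}. j \<le> lam i}"

definition ncols :: "(nat \<Rightarrow> nat) \<Rightarrow> nat" where
  "ncols lam = lam 1"

(* T j i = entry in column j, row i *)
definition ssyt :: "nat \<Rightarrow> (nat \<Rightarrow> nat) \<Rightarrow> (nat \<Rightarrow> nat \<Rightarrow> nat) \<Rightarrow> bool" where
  "ssyt n lam T \<longleftrightarrow>
     (\<forall>j i. 1 \<le> j \<longrightarrow> j \<le> ncols lam \<longrightarrow> 1 \<le> i \<longrightarrow> i \<le> col_len n lam j \<longrightarrow>
        1 \<le> T j i \<and> T j i \<le> n) \<and>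
     (\<forall>j i. 1 \<le> j \<longrightarrow> j + 1 \<le> ncols lam \<longrightarrow> 1 \<le> i \<longrightarrow> i \<le> col_len n lam (j+1) \<longrightarrow>
        T j i \<le> T (j+1) i) \<and>
     (\<forall>j i. 1 \<le> j \<longrightarrow> j \<le> ncols lam \<longrightarrow> 1 \<le> i \<longrightarrow> i + 1 \<le> col_len n lam j \<longrightarrow>
        T j i < T j (i+1))"

definition col_lens :: "nat \<Rightarrow> (nat \<Rightarrow> nat) \<Rightarrow> nat set" where
  "col_lens n lam = col_len n lam ` {1..ncols lam}"

definition ndist :: "nat \<Rightarrow> (nat \<Rightarrow> nat) \<Rightarrow> nat" where
  "ndist n lam = card (col_lens n lam)"

definition zeta :: "nat \<Rightarrow> (nat \<Rightarrow> nat) \<Rightarrow> nat \<Rightarrow> nat" where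
  "zeta n lam h = (if h = 0 then 0
      else if h \<le> ndist n lam then sorted_list_of_set (col_lens n lam) ! (h - 1)
      else n)"

definition beta :: "nat \<Rightarrow> (nat \<Rightarrow> nat) \<Rightarrow> nat \<Rightarrow> nat" where
  "beta n lam h = (if 1 \<le> h \<and> h \<le> ndist n lam
      then Max {j\<in>{1..ncols lam}. col_len n lam j = zeta n lam h} else 1)"

definition reading_le :: "nat \<times> nat \<Rightarrow> nat \<times> nat \<Rightarrow> bool" where
  "reading_le p q \<longleftrightarrow> fst p < fst q \<or> (fst p = fst q \<and> snd q \<le> snd p)"

(* permutations in one-line form: pi k for positions k = 1..n *)

definition pi0 :: "nat \<Rightarrow> (nat \<Rightarrow> nat) \<Rightarrow> (nat \<Rightarrow> nat \<Rightarrow> nat) \<Rightarrow> nat \<Rightarrow> nat" where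
  "pi0 n lam T k = (let c = col_len n lam 1 in
      if 1 \<le> k \<and> k \<le> c then T 1 k
      else if c < k \<and> k \<le> n then
        sorted_list_of_set ({1..n} - T 1 ` {1..c}) ! (k - c - 1)
      else k)"

(* the index sequence i_0, i_1, ..., i_m of a greedy step with column length c,
   target value t, starting at index i0 *)
definition is_chain :: "nat \<Rightarrow> nat \<Rightarrow> nat \<Rightarrow> (nat \<Rightarrow> nat) \<Rightarrow> nat \<Rightarrow> nat list \<Rightarrow> bool" where
  "is_chain n c t p i0 is \<longleftrightarrow>
     is \<noteq> [] \<and> hd is = i0 \<and> p (last is) = t \<and>
     (\<forall>x. Suc x < length is \<longrightarrow>
        p (is ! x) < t \<and>
        (\<exists>k. c < k \<and> k \<le> n \<and> p (is ! x) < p k \<and> p k \<le> t) \<and>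
        is ! Suc x = (LEAST k. c < k \<and> k \<le> n \<and> p (is ! x) < p k \<and> p k \<le> t))"

(* new permutation: position i_x gets p(i_{x-1}) for 1 \<le> x \<le> m, position i_0 gets p(i_m) *)
definition chain_update :: "(nat \<Rightarrow> nat) \<Rightarrow> nat list \<Rightarrow> nat \<Rightarrow> nat" where
  "chain_update p is k = (if k = hd is then p (last is)
      else (case map_of (zip (tl is) (map p (butlast is))) k of
              Some v \<Rightarrow> v | None \<Rightarrow> p k))"

definition greedy_step :: "nat \<Rightarrow> (nat \<Rightarrow> nat) \<Rightarrow> (nat \<Rightarrow> nat \<Rightarrow> nat) \<Rightarrow> nat \<Rightarrow> nat
     \<Rightarrow> (nat \<Rightarrow> nat) \<Rightarrow> (nat \<Rightarrow> nat) \<Rightarrow> bool" where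
  "greedy_step n lam T j i p p' \<longleftrightarrow>
     (if T (j-1) i = T j i then p' = p
      else (\<exists>is. is_chain n (col_len n lam j) (T j i) p i is \<and> p' = chain_update p is))"

(* greedy n lam T (j,i) p  <->  p is pi^(j,i) (defined at (1,1) and at (j,i), 2 \<le> j \<le> lambda_1,
   1 \<le> i \<le> c_j; predecessor of (j,i) is (j,i+1), with (j,c_j+1) meaning (j-1,1)) *)
inductive greedy :: "nat \<Rightarrow> (nat \<Rightarrow> nat) \<Rightarrow> (nat \<Rightarrow> nat \<Rightarrow> nat) \<Rightarrow> nat \<times> nat
     \<Rightarrow> (nat \<Rightarrow> nat) \<Rightarrow> bool" for n lam T where
  start: "greedy n lam T (1,1) (pi0 n lam T)"
| step: "\<lbrakk> 2 \<le> j; j \<le> ncols lam; 1 \<le> i; i \<le> col_len n lam j;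
           greedy n lam T (if i = col_len n lam j then (j-1, 1) else (j, i+1)) p;
           greedy_step n lam T j i p p' \<rbrakk>
         \<Longrightarrow> greedy n lam T (j,i) p'"

end

theory Submission
  imports Defs
begin


lemma chain_basic:
  assumes "is_chain n c t p i0 xs" "Suc x < length xs"
  shows "c < xs!Suc x \<and> xs!Suc x \<le> n \<and> p (xs!x) < p (xs!Suc x) \<and> p (xs!Suc x) \<le> t
        \<and> (\<forall>k. c < k \<and> k \<le> n \<and> p (xs!x) < p k \<and> p k \<le> t \<longrightarrow> xs!Suc x \<le> k)"
proof -
  let ?Q = "\<lambda>k. c < k \<and> k \<le> n \<and> p (xs ! x) < p k \<and> p k \<le> t"
  have ex: "\<exists>k. ?Q k" and eq: "xs ! Suc x = (LEAST k. ?Q k)"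
    using assms unfolding is_chain_def by blast+
  have "?Q (LEAST k. ?Q k)" using ex by (rule LeastI_ex)
  moreover have "\<forall>k. ?Q k \<longrightarrow> (LEAST k. ?Q k) \<le> k" by (auto intro: Least_le)
  ultimately show ?thesis using eq by simp
qed

lemma chain_mono:
  assumes "is_chain n c t p i0 xs" "x < y" "y < length xs"
  shows "p (xs!x) < p (xs!y)"
  using assms(2,3)
proof (induction y)
  case 0 then show ?case by simp
next
  case (Suc y)
  have s: "p (xs!y) < p (xs!Suc y)" using chain_basic[OF assms(1) Suc.prems(2)] by simp
  show ?case
  proof (cases "x = y")
    case True then show ?thesis using s by simp
  next
    case False then show ?thesis using Suc s by simp
  qed
qed

lemma chain_inj_idx:
  assumes "is_chain n c t p i0 xs" "x < length xs" "y < length xs" "p (xs!x) = p (xs!y)"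
  shows "x = y"
  using chain_mono[OF assms(1)] assms(2-4) by (metis less_irrefl linorder_neqE_nat)

lemma chain_distinct:
  assumes "is_chain n c t p i0 xs" shows "distinct xs"
  unfolding distinct_conv_nth using chain_inj_idx[OF assms] by metis

lemma chain_nz: "is_chain n c t p i0 xs \<Longrightarrow> xs \<noteq> []"
  unfolding is_chain_def by simp

lemma chain_hd: "is_chain n c t p i0 xs \<Longrightarrow> xs!0 = i0"
  unfolding is_chain_def by (metis hd_conv_nth)

lemma chain_last: "is_chain n c t p i0 xs \<Longrightarrow> p (xs!(length xs - 1)) = t"
  unfolding is_chain_def by (metis last_conv_nth)

lemma cu_nth:
  assumes "is_chain n c t p i0 xs" "x < length xs"
  shows "chain_update p xs (xs!x) = p (xs ! (if x = 0 then length xs - 1 else x - 1))"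
proof (cases x)
  case 0 then show ?thesis using assms chain_nz[OF assms(1)]
    by (simp add: chain_update_def hd_conv_nth last_conv_nth)
next
  case (Suc y)
  have d: "distinct xs" by (rule chain_distinct[OF assms(1)])
  have ne: "xs \<noteq> []" by (rule chain_nz[OF assms(1)])
  have "xs ! x \<noteq> hd xs" using d ne assms(2) Suc by (simp add: hd_conv_nth nth_eq_iff_index_eq)
  moreover have "map_of (zip (tl xs) (map p (butlast xs))) (tl xs ! y) = Some (map p (butlast xs) ! y)"
    by (rule map_of_zip_nth) (use d assms(2) Suc in \<open>auto simp: distinct_tl\<close>)
  moreover have "tl xs ! y = xs ! x" using Suc assms(2) by (simp add: nth_tl)
  moreover have "map p (butlast xs) ! y = p (xs ! y)" using Suc assms(2) by (simp add: nth_butlast)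
  ultimately show ?thesis using Suc by (simp add: chain_update_def)
qed

lemma cu_out:
  assumes "k \<notin> set xs" "xs \<noteq> []"
  shows "chain_update p xs k = p k"
proof -
  have h1: "k \<noteq> hd xs" using assms by auto
  have "k \<notin> set (tl xs)" using assms by (meson list.set_sel(2))
  hence h2: "map_of (zip (tl xs) (map p (butlast xs))) k = None"
    by (auto simp: map_of_eq_None_iff dest: set_zip_leftD)
  show ?thesis unfolding chain_update_def h2 using h1 by simp
qed

lemma chain_range:
  assumes "is_chain n c t p i0 xs" "x < length xs" "1 \<le> i0" "i0 \<le> c" "c \<le> n"
  shows "1 \<le> xs!x \<and> xs!x \<le> n \<and> (x \<noteq> 0 \<longrightarrow> c < xs!x)"
proof (cases x)
  case 0 then show ?thesis using assms chain_hd[OF assms(1)] by simp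
next
  case (Suc y) then show ?thesis using chain_basic[OF assms(1), of y] assms(2) by simp
qed

lemma cu_small:
  assumes "is_chain n c t p i0 xs" "i0 \<le> c" "k \<le> c" "k \<noteq> i0"
  shows "chain_update p xs k = p k"
proof -
  have "k \<notin> set xs"
  proof
    assume "k \<in> set xs"
    then obtain x where x: "x < length xs" "xs!x = k" by (auto simp: in_set_conv_nth)
    show False
    proof (cases x)
      case 0 then show ?thesis using x assms chain_hd[OF assms(1)] by simp
    next
      case (Suc y) then show ?thesis using chain_basic[OF assms(1), of y] x assms by simp
    qed
  qed
  then show ?thesis using cu_out chain_nz[OF assms(1)] by metis
qed

definition prv :: "nat list \<Rightarrow> nat \<Rightarrow> nat" where
  "prv xs x = (if x = 0 then length xs - 1 else x - 1)"

lemma cu_inj: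
  assumes ch: "is_chain n c t p i0 xs" and inj: "inj_on p {1..n}"
    and r: "1 \<le> i0" "i0 \<le> c" "c \<le> n"
  shows "inj_on (chain_update p xs) {1..n}"
proof (rule inj_onI)
  fix a b assume a: "a \<in> {1..n}" and b: "b \<in> {1..n}" and e: "chain_update p xs a = chain_update p xs b"
  have ne: "xs \<noteq> []" by (rule chain_nz[OF ch])
  have rng: "\<And>x. x < length xs \<Longrightarrow> xs!x \<in> {1..n}" using chain_range[OF ch _ r] by auto
  have prvl: "\<And>x. x < length xs \<Longrightarrow> prv xs x < length xs" using ne by (auto simp: prv_def)
  have cu: "\<And>x. x < length xs \<Longrightarrow> chain_update p xs (xs!x) = p (xs ! prv xs x)"
    using cu_nth[OF ch] by (simp add: prv_def)
  show "a = b"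
  proof (cases "a \<in> set xs")
    case True
    then obtain x where x: "x < length xs" "xs!x = a" by (auto simp: in_set_conv_nth)
    show ?thesis
    proof (cases "b \<in> set xs")
      case True
      then obtain y where y: "y < length xs" "xs!y = b" by (auto simp: in_set_conv_nth)
      have "p (xs ! prv xs x) = p (xs ! prv xs y)" using e x y cu by metis
      then have "prv xs x = prv xs y" using chain_inj_idx[OF ch] prvl x y by blast
      then have "x = y" using x y ne by (auto simp: prv_def split: if_splits)
      then show ?thesis using x y by simp
    next
      case False
      have "p (xs ! prv xs x) = p b" using e x cu cu_out[OF False ne] by metis
      then have "xs ! prv xs x = b" using inj rng[OF prvl[OF x(1)]] b by (auto dest: inj_onD)
      then show ?thesis using False prvl[OF x(1)] by auto
    qed
  next
    case False
    note fa = False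
    show ?thesis
    proof (cases "b \<in> set xs")
      case True
      then obtain y where y: "y < length xs" "xs!y = b" by (auto simp: in_set_conv_nth)
      have "p (xs ! prv xs y) = p a" using e y cu cu_out[OF fa ne] by metis
      then have "xs ! prv xs y = a" using inj rng[OF prvl[OF y(1)]] a by (auto dest: inj_onD)
      then show ?thesis using fa prvl[OF y(1)] by auto
    next
      case False
      have "p a = p b" using e cu_out[OF False ne] cu_out[OF fa ne] by metis
      then show ?thesis using inj a b by (auto dest: inj_onD)
    qed
  qed
qed

lemma cu_sorted:
  assumes ch: "is_chain n c t p i0 xs" and inj: "inj_on p {1..n}"
    and r: "1 \<le> i0" "i0 \<le> c" "c \<le> L" "H \<le> n" and cn: "c \<le> n"
    and srt: "\<forall>a b. L + 1 \<le> a \<longrightarrow> a < b \<longrightarrow> b \<le> H \<longrightarrow> p a < p b"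
  shows "\<forall>a b. L + 1 \<le> a \<longrightarrow> a < b \<longrightarrow> b \<le> H \<longrightarrow> chain_update p xs a < chain_update p xs b"
proof (intro allI impI)
  fix a b assume ab: "L + 1 \<le> a" "a < b" "b \<le> H"
  have ne: "xs \<noteq> []" by (rule chain_nz[OF ch])
  have rng: "\<And>x. x < length xs \<Longrightarrow> xs!x \<in> {1..n}" using chain_range[OF ch _ r(1,2) cn] by auto
  have pab: "p a < p b" using srt ab by blast
  have cu: "\<And>x. x < length xs \<Longrightarrow> x \<noteq> 0 \<Longrightarrow> chain_update p xs (xs!x) = p (xs ! (x - 1))"
    using cu_nth[OF ch] by simp
  have nz: "\<And>x k. x < length xs \<Longrightarrow> xs!x = k \<Longrightarrow> c < k \<Longrightarrow> x \<noteq> 0"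
    using chain_hd[OF ch] r by (metis not_less)
  show "chain_update p xs a < chain_update p xs b"
  proof (cases "a \<in> set xs")
    case True
    then obtain x where x: "x < length xs" "xs!x = a" by (auto simp: in_set_conv_nth)
    have x0: "x \<noteq> 0" using nz[OF x] ab r by simp
    then obtain x' where x': "x = Suc x'" by (cases x) auto
    have cua: "chain_update p xs a = p (xs!x')" using cu[OF x(1) x0] x x' by simp
    have lt: "p (xs!x') < p a" using chain_basic[OF ch, of x'] x x' by simp
    show ?thesis
    proof (cases "b \<in> set xs")
      case True
      then obtain y where y: "y < length xs" "xs!y = b" by (auto simp: in_set_conv_nth)
      have y0: "y \<noteq> 0" using nz[OF y] ab r by simp
      then obtain y' where y': "y = Suc y'" by (cases y) auto
      have cub: "chain_update p xs b = p (xs!y')" using cu[OF y(1) y0] y y' by simp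
      have "x < y"
      proof (rule ccontr)
        assume "\<not> x < y"
        then have "y \<le> x" by simp
        then have "p b \<le> p a" using chain_mono[OF ch, of y x] x y
          by (cases "y = x") auto
        then show False using pab by simp
      qed
      then have "p (xs!x') < p (xs!y')" using chain_mono[OF ch, of x' y'] x' y' y by simp
      then show ?thesis using cua cub by simp
    next
      case False
      then show ?thesis using cua lt pab cu_out[OF False ne] by simp
    qed
  next
    case False
    note fa = False
    have cua: "chain_update p xs a = p a" using cu_out[OF fa ne] .
    show ?thesis
    proof (cases "b \<in> set xs")
      case True
      then obtain y where y: "y < length xs" "xs!y = b" by (auto simp: in_set_conv_nth)
      have y0: "y \<noteq> 0" using nz[OF y] ab r by simp
      then obtain y' where y': "y = Suc y'" by (cases y) auto
      have cub: "chain_update p xs b = p (xs!y')" using cu[OF y(1) y0] y y' by simp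
      have bas: "\<forall>k. c < k \<and> k \<le> n \<and> p (xs!y') < p k \<and> p k \<le> t \<longrightarrow> b \<le> k"
                "p b \<le> t" using chain_basic[OF ch, of y'] y y' by auto
      have "\<not> p (xs!y') < p a"
      proof
        assume "p (xs!y') < p a"
        then have "b \<le> a" using bas pab ab r by auto
        then show False using ab by simp
      qed
      moreover have "xs!y' \<noteq> a" using fa y y' by auto
      moreover have "xs!y' \<in> {1..n}" using rng y y' by simp
      moreover have "a \<in> {1..n}" using ab r by simp
      ultimately have "p a < p (xs!y')" using inj
        by (metis inj_onD linorder_neqE_nat)
      then show ?thesis using cua cub by simp
    next
      case False
      then show ?thesis using cua pab cu_out[OF False ne] by simp
    qed
  qed
qed


lemma col_len_anti: "j \<le> j' \<Longrightarrow> col_len n lam j' \<le> col_len n lam j"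
  unfolding col_len_def by (rule card_mono) auto

lemma col_len_le: "col_len n lam j \<le> n"
proof -
  have "col_len n lam j \<le> card {1..n}" unfolding col_len_def by (rule card_mono) auto
  then show ?thesis by simp
qed

lemma part_le1:
  assumes "is_partition n lam" "1 \<le> i" "i \<le> n" shows "lam i \<le> lam 1"
  using assms(2,3)
proof (induction i)
  case 0 then show ?case by simp
next
  case (Suc i)
  show ?case
  proof (cases "i = 0")
    case True then show ?thesis by simp
  next
    case False
    then have "lam (Suc i) \<le> lam i" using assms(1) Suc.prems unfolding is_partition_def by auto
    then show ?thesis using Suc False by simp
  qed
qed

lemma ncols_pos: assumes P: "is_partition n lam" shows "1 \<le> ncols lam"
proof -
  obtain i where i: "i \<in> {1..n}" "lam i \<noteq> 0" using P unfolding is_partition_def by blast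
  then have "lam i \<le> lam 1" using part_le1[OF P] by simp
  then show ?thesis using i unfolding ncols_def by simp
qed

lemma col_strict:
  assumes "ssyt n lam T" "1 \<le> j" "j \<le> ncols lam" "1 \<le> a" "a < b" "b \<le> col_len n lam j"
  shows "T j a < T j b"
  using assms(5,6)
proof (induction b)
  case 0 then show ?case by simp
next
  case (Suc b)
  have s: "T j b < T j (b+1)" using assms(1-4) Suc.prems unfolding ssyt_def
    by (metis Suc_eq_plus1 less_Suc_eq_le order_trans)
  show ?case
  proof (cases "a = b")
    case True then show ?thesis using s by simp
  next
    case False then show ?thesis using Suc s by simp
  qed
qed

lemma pi0_props:
  assumes P: "is_partition n lam" and S: "ssyt n lam T"
  shows "inj_on (pi0 n lam T) {1..n}"
    and "\<forall>a b. col_len n lam 1 + 1 \<le> a \<longrightarrow> a < b \<longrightarrow> b \<le> n \<longrightarrow> pi0 n lam T a < pi0 n lam T b"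
    and "\<forall>k. 1 \<le> k \<and> k \<le> col_len n lam 1 \<longrightarrow> pi0 n lam T k = T 1 k"
proof -
  define c where "c = col_len n lam 1"
  define A where "A = T 1 ` {1..c}"
  define ys where "ys = sorted_list_of_set ({1..n} - A)"
  have c1: "1 \<le> ncols lam" by (rule ncols_pos[OF P])
  have cn: "c \<le> n" unfolding c_def by (rule col_len_le)
  have Tr: "\<And>k. 1 \<le> k \<Longrightarrow> k \<le> c \<Longrightarrow> T 1 k \<in> {1..n}"
    using S c1 unfolding ssyt_def c_def by auto
  have Tm: "\<And>a b. 1 \<le> a \<Longrightarrow> a < b \<Longrightarrow> b \<le> c \<Longrightarrow> T 1 a < T 1 b"
    using col_strict[OF S _ c1] unfolding c_def by simp
  have Ti: "inj_on (T 1) {1..c}"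
    by (rule inj_onI) (metis Tm atLeastAtMost_iff less_irrefl linorder_neqE_nat)
  have cA: "card A = c" unfolding A_def using Ti by (simp add: card_image)
  have AS: "A \<subseteq> {1..n}" unfolding A_def using Tr by auto
  have ly: "length ys = n - c" unfolding ys_def using cA AS
    by (simp add: card_Diff_subset finite_subset)
  have sy: "sorted_wrt (<) ys" unfolding ys_def by (rule strict_sorted_list_of_set)
  have dy: "distinct ys" unfolding ys_def by simp
  have sety: "set ys = {1..n} - A" unfolding ys_def by simp
  have pv: "\<And>k. pi0 n lam T k = (if 1 \<le> k \<and> k \<le> c then T 1 k else if c < k \<and> k \<le> n then ys ! (k - c - 1) else k)"
    unfolding pi0_def c_def A_def ys_def Let_def by simp
  show "\<forall>k. 1 \<le> k \<and> k \<le> col_len n lam 1 \<longrightarrow> pi0 n lam T k = T 1 k"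
    using pv unfolding c_def by simp
  show "\<forall>a b. col_len n lam 1 + 1 \<le> a \<longrightarrow> a < b \<longrightarrow> b \<le> n \<longrightarrow> pi0 n lam T a < pi0 n lam T b"
  proof (intro allI impI)
    fix a b assume ab: "col_len n lam 1 + 1 \<le> a" "a < b" "b \<le> n"
    then have "ys ! (a - c - 1) < ys ! (b - c - 1)"
      using sorted_wrt_nth_less[OF sy, of "a - c - 1" "b - c - 1"] ly unfolding c_def by simp
    then show "pi0 n lam T a < pi0 n lam T b" using pv ab unfolding c_def by simp
  qed
  show "inj_on (pi0 n lam T) {1..n}"
  proof (rule inj_onI)
    fix a b assume a: "a \<in> {1..n}" and b: "b \<in> {1..n}" and e: "pi0 n lam T a = pi0 n lam T b"
    have yin: "\<And>k. c < k \<Longrightarrow> k \<le> n \<Longrightarrow> ys ! (k - c - 1) \<in> {1..n} - A"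
    proof -
      fix k assume "c < k" "k \<le> n"
      then have "k - c - 1 < length ys" using ly by simp
      then show "ys ! (k - c - 1) \<in> {1..n} - A" using sety nth_mem by metis
    qed
    have ain: "\<And>k. 1 \<le> k \<Longrightarrow> k \<le> c \<Longrightarrow> T 1 k \<in> A" unfolding A_def by auto
    show "a = b"
    proof (cases "a \<le> c")
      case True
      show ?thesis
      proof (cases "b \<le> c")
        case True
        then show ?thesis using \<open>a \<le> c\<close> a b e pv Ti by (auto dest: inj_onD)
      next
        case False
        then show ?thesis using \<open>a \<le> c\<close> a b e pv yin[of b] ain[of a] by auto
      qed
    next
      case False
      note fa = False
      show ?thesis
      proof (cases "b \<le> c")
        case True
        then show ?thesis using fa a b e pv yin[of a] ain[of b] by auto
      next
        case False
        then have "ys ! (a - c - 1) = ys ! (b - c - 1)" using fa a b e pv by auto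
        then have "a - c - 1 = b - c - 1" using dy ly fa False a b
          by (subst (asm) nth_eq_iff_index_eq) auto
        then show ?thesis using fa False by simp
      qed
    qed
  qed
qed



lemma step_facts:
  assumes gs: "greedy_step n lam T j i p p'" and inj: "inj_on p {1..n}"
    and i: "1 \<le> i" "i \<le> col_len n lam j" and pi: "p i = T (j-1) i"
  shows "p' i = T j i \<and> (\<forall>k. k \<le> col_len n lam j \<longrightarrow> k \<noteq> i \<longrightarrow> p' k = p k) \<and> inj_on p' {1..n}"
proof (cases "T (j-1) i = T j i")
  case True
  then have "p' = p" using gs unfolding greedy_step_def by simp
  then show ?thesis using True pi inj by simp
next
  case False
  then obtain xs where ch: "is_chain n (col_len n lam j) (T j i) p i xs" and p': "p' = chain_update p xs"
    using gs unfolding greedy_step_def by auto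
  have cn: "col_len n lam j \<le> n" by (rule col_len_le)
  have "p' i = T j i" using cu_nth[OF ch, of 0] chain_nz[OF ch] chain_hd[OF ch] chain_last[OF ch] p'
    by simp
  moreover have "\<forall>k. k \<le> col_len n lam j \<longrightarrow> k \<noteq> i \<longrightarrow> p' k = p k"
    using cu_small[OF ch i(2)] p' by simp
  moreover have "inj_on p' {1..n}" using cu_inj[OF ch inj i cn] p' by simp
  ultimately show ?thesis by simp
qed

lemma inv:
  assumes P: "is_partition n lam" and S: "ssyt n lam T"
  shows "greedy n lam T q p \<Longrightarrow> 1 \<le> fst q \<and> 1 \<le> snd q \<and> inj_on p {1..n}
     \<and> (\<forall>k. snd q \<le> k \<and> k \<le> col_len n lam (fst q) \<longrightarrow> p k = T (fst q) k)
     \<and> (\<forall>k. 1 \<le> k \<and> k < snd q \<longrightarrow> p k = T (fst q - 1) k)"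
proof (induction q p rule: greedy.induct)
  case start
  then show ?case using pi0_props[OF P S] by simp
next
  case (step j i p p')
  have anti: "col_len n lam j \<le> col_len n lam (j-1)" by (rule col_len_anti) simp
  have A: "inj_on p {1..n} \<and> p i = T (j-1) i \<and> (\<forall>k. 1 \<le> k \<and> k < i \<longrightarrow> p k = T (j-1) k)
           \<and> (\<forall>k. i < k \<and> k \<le> col_len n lam j \<longrightarrow> p k = T j k)"
  proof (cases "i = col_len n lam j")
    case True
    then show ?thesis using step.IH anti step.hyps(3) by auto
  next
    case False
    then show ?thesis using step.IH step.hyps(3,4) by auto
  qed
  have B: "p' i = T j i \<and> (\<forall>k. k \<le> col_len n lam j \<longrightarrow> k \<noteq> i \<longrightarrow> p' k = p k) \<and> inj_on p' {1..n}"
    using step_facts[OF step.hyps(6)] A step.hyps(3,4) by blast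
  show ?case
  proof (intro conjI allI impI)
    fix k assume k: "snd (j, i) \<le> k \<and> k \<le> col_len n lam (fst (j, i))"
    show "p' k = T (fst (j, i)) k"
      using A B k by (cases "k = i") auto
  next
    fix k assume k: "1 \<le> k \<and> k < snd (j, i)"
    show "p' k = T (fst (j, i) - 1) k"
      using A B k step.hyps(4) by auto
  qed (use step.hyps B in auto)
qed

definition blk :: "nat \<Rightarrow> nat \<Rightarrow> (nat \<Rightarrow> nat) \<Rightarrow> bool" where
  "blk L H p \<longleftrightarrow> (\<forall>a b. L + 1 \<le> a \<longrightarrow> a < b \<longrightarrow> b \<le> H \<longrightarrow> p a < p b)"

lemma block:
  assumes P: "is_partition n lam" and S: "ssyt n lam T"
    and j0: "1 \<le> j0" and cl: "\<forall>j'. j0 < j' \<longrightarrow> j' \<le> ncols lam \<longrightarrow> col_len n lam j' \<le> L"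
    and Hn: "H \<le> n" and base: "\<forall>q. greedy n lam T (j0,1) q \<longrightarrow> blk L H q"
  shows "greedy n lam T q p \<Longrightarrow> j0 < fst q \<or> (fst q = j0 \<and> snd q = 1) \<Longrightarrow> blk L H p"
proof (induction q p rule: greedy.induct)
  case start
  then have "j0 = 1" using j0 by simp
  then show ?case using base greedy.start by auto
next
  case (step j i p p')
  show ?case
  proof (cases "j = j0 \<and> i = 1")
    case True
    then show ?thesis using base greedy.step[OF step.hyps] by blast
  next
    case False
    then have jj: "j0 < j" using step.prems by auto
    have jj': "j0 < j - 1 \<or> j - 1 = j0" using jj by arith
    have "blk L H p"
      using step.IH jj jj' by (cases "i = col_len n lam j") auto
    moreover have injp: "inj_on p {1..n}" using inv[OF P S step.hyps(5)] by simp
    ultimately show ?thesis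
    proof (cases "T (j-1) i = T j i")
      case True
      then show ?thesis using step.hyps(6) \<open>blk L H p\<close> unfolding greedy_step_def by simp
    next
      case False
      then obtain xs where ch: "is_chain n (col_len n lam j) (T j i) p i xs" and p': "p' = chain_update p xs"
        using step.hyps(6) unfolding greedy_step_def by auto
      have "col_len n lam j \<le> L" using cl jj step.hyps(2) by simp
      then show ?thesis using cu_sorted[OF ch injp step.hyps(3,4) _ Hn col_len_le] \<open>blk L H p\<close> p'
        unfolding blk_def by blast
    qed
  qed
qed

lemma zeta_facts:
  assumes P: "is_partition n lam"
  shows "1 \<le> h \<Longrightarrow> h \<le> ndist n lam \<Longrightarrow>
     1 \<le> beta n lam h \<and> beta n lam h \<le> ncols lam \<and> col_len n lam (beta n lam h) = zeta n lam h
     \<and> (\<forall>j'. beta n lam h < j' \<longrightarrow> j' \<le> ncols lam \<longrightarrow> col_len n lam j' \<le> zeta n lam (h-1))"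
    and "col_len n lam 1 \<le> zeta n lam (ndist n lam) \<and> zeta n lam (ndist n lam + 1) = n
         \<and> beta n lam (ndist n lam + 1) = 1"
proof -
  define S where "S = col_lens n lam"
  define xs where "xs = sorted_list_of_set S"
  have fS: "finite S" unfolding S_def col_lens_def by simp
  have lx: "length xs = ndist n lam" unfolding xs_def ndist_def S_def using fS by simp
  have sx: "set xs = S" unfolding xs_def using fS by simp
  have so: "sorted xs" unfolding xs_def by simp
  have ss: "sorted_wrt (<) xs" unfolding xs_def by (rule strict_sorted_list_of_set)
  have c1: "1 \<le> ncols lam" by (rule ncols_pos[OF P])
  have inS: "\<And>j. 1 \<le> j \<Longrightarrow> j \<le> ncols lam \<Longrightarrow> col_len n lam j \<in> S"
    unfolding S_def col_lens_def by auto
  have zh: "\<And>h. 1 \<le> h \<Longrightarrow> h \<le> ndist n lam \<Longrightarrow> zeta n lam h = xs ! (h-1)"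
    unfolding zeta_def xs_def S_def by simp
  {
    assume h: "1 \<le> h" "h \<le> ndist n lam"
    define J where "J = {j\<in>{1..ncols lam}. col_len n lam j = zeta n lam h}"
    have bJ: "beta n lam h = Max J" unfolding beta_def J_def using h by simp
    have "zeta n lam h \<in> S" using zh[OF h] sx lx h by (metis Suc_le_eq Suc_pred' le_less_trans lessI not_le not_one_le_zero nth_mem)
    then have "J \<noteq> {}" unfolding J_def S_def col_lens_def by auto
    moreover have fJ: "finite J" unfolding J_def by simp
    ultimately have MJ: "Max J \<in> J" by (rule Max_in[rotated])
    have rest: "\<forall>j'. beta n lam h < j' \<longrightarrow> j' \<le> ncols lam \<longrightarrow> col_len n lam j' \<le> zeta n lam (h-1)"
    proof (intro allI impI)
      fix j' assume j': "beta n lam h < j'" "j' \<le> ncols lam"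
      have "j' \<notin> J"
      proof
        assume "j' \<in> J"
        then have "j' \<le> Max J" by (rule Max_ge[OF fJ])
        then show False using j' bJ by simp
      qed
      then have ne: "col_len n lam j' \<noteq> zeta n lam h" unfolding J_def using j' MJ bJ J_def by auto
      have "col_len n lam j' \<le> col_len n lam (beta n lam h)" using j' by (intro col_len_anti) simp
      then have lt: "col_len n lam j' < xs ! (h-1)" using ne MJ bJ zh[OF h] unfolding J_def by auto
      have "col_len n lam j' \<in> set xs" using sx inS[of j'] j' MJ bJ unfolding J_def by auto
      then obtain k where k: "k < length xs" "xs ! k = col_len n lam j'" by (auto simp: in_set_conv_nth)
      have kh: "k < h - 1"
      proof (rule ccontr)
        assume "\<not> k < h - 1"
        then have "xs ! (h-1) \<le> xs ! k" using sorted_nth_mono[OF so, of "h-1" k] k by simp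
        then show False using lt k by simp
      qed
      then have "zeta n lam (h-1) = xs ! (h-1-1)" using zh[of "h-1"] h by simp
      moreover have "xs ! k \<le> xs ! (h-1-1)" using sorted_nth_mono[OF so, of k "h-1-1"] kh h lx by simp
      ultimately show "col_len n lam j' \<le> zeta n lam (h-1)" using k by simp
    qed
    show "1 \<le> beta n lam h \<and> beta n lam h \<le> ncols lam \<and> col_len n lam (beta n lam h) = zeta n lam h
     \<and> (\<forall>j'. beta n lam h < j' \<longrightarrow> j' \<le> ncols lam \<longrightarrow> col_len n lam j' \<le> zeta n lam (h-1))"
      using MJ bJ rest unfolding J_def by auto
  }
  have dpos: "1 \<le> ndist n lam" using inS[OF _ c1] fS lx sx by (metis One_nat_def Suc_leI empty_iff length_greater_0_conv le_refl list.set(1))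
  have "col_len n lam 1 \<in> set xs" using inS[of 1] c1 sx by simp
  then obtain k where k: "k < length xs" "xs ! k = col_len n lam 1" by (auto simp: in_set_conv_nth)
  have "xs ! k \<le> xs ! (ndist n lam - 1)" using sorted_nth_mono[OF so, of k "ndist n lam - 1"] k lx by simp
  then show "col_len n lam 1 \<le> zeta n lam (ndist n lam) \<and> zeta n lam (ndist n lam + 1) = n
         \<and> beta n lam (ndist n lam + 1) = 1"
    using zh[OF dpos] k unfolding zeta_def beta_def by simp
qed

theorem lemma4p1:
  fixes n :: nat and lam :: "nat \<Rightarrow> nat" and T :: "nat \<Rightarrow> nat \<Rightarrow> nat" and h :: nat
  assumes "0 < n"
    and "is_partition n lam"
    and "ssyt n lam T"
    and "1 \<le> h" and "h \<le> ndist n lam + 1"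
  shows "\<forall>j i p. greedy n lam T (j,i) p \<and> reading_le (beta n lam h, 1) (j,i) \<longrightarrow>
           (\<forall>a b. zeta n lam (h-1) + 1 \<le> a \<longrightarrow> a < b \<longrightarrow> b \<le> zeta n lam h \<longrightarrow> p a < p b)"
proof (intro allI impI)
  fix j i p assume A: "greedy n lam T (j,i) p \<and> reading_le (beta n lam h, 1) (j,i)"
  note P = assms(2) and S = assms(3)
  have i1: "1 \<le> i" using inv[OF P S, of "(j,i)" p] A by simp
  have rd: "beta n lam h < fst (j,i) \<or> (fst (j,i) = beta n lam h \<and> snd (j,i) = 1)"
    using A i1 unfolding reading_le_def by auto
  have "blk (zeta n lam (h-1)) (zeta n lam h) p"
  proof (cases "h \<le> ndist n lam")
    case True
    note Z = zeta_facts(1)[OF P assms(4) True]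
    show ?thesis
    proof (rule block[OF P S _ _ _ _ _ rd])
      show "1 \<le> beta n lam h" using Z by simp
      show "\<forall>j'. beta n lam h < j' \<longrightarrow> j' \<le> ncols lam \<longrightarrow> col_len n lam j' \<le> zeta n lam (h - 1)"
        using Z by simp
      show "zeta n lam h \<le> n" using Z col_len_le by metis
      show "greedy n lam T (j, i) p" using A by simp
      show "\<forall>q. greedy n lam T (beta n lam h, 1) q \<longrightarrow> blk (zeta n lam (h - 1)) (zeta n lam h) q"
      proof (intro allI impI)
        fix q assume g: "greedy n lam T (beta n lam h, 1) q"
        have qv: "\<forall>k. 1 \<le> k \<and> k \<le> col_len n lam (beta n lam h) \<longrightarrow> q k = T (beta n lam h) k"
          using inv[OF P S g] by simp
        show "blk (zeta n lam (h - 1)) (zeta n lam h) q"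
          unfolding blk_def
        proof (intro allI impI)
          fix a b assume ab: "zeta n lam (h - 1) + 1 \<le> a" "a < b" "b \<le> zeta n lam h"
          have "T (beta n lam h) a < T (beta n lam h) b"
            using col_strict[OF S, of "beta n lam h" a b] Z ab by simp
          then show "q a < q b" using qv ab Z by simp
        qed
      qed
    qed
  next
    case False
    then have hd: "h = ndist n lam + 1" using assms(5) by simp
    note Z = zeta_facts(2)[OF P]
    have rd': "1 < fst (j,i) \<or> (fst (j,i) = 1 \<and> snd (j,i) = 1)" using rd Z hd by simp
    show ?thesis unfolding hd
    proof (rule block[OF P S _ _ _ _ _ rd'])
      show "1 \<le> (1::nat)" by simp
      show "\<forall>j'. 1 < j' \<longrightarrow> j' \<le> ncols lam \<longrightarrow> col_len n lam j' \<le> zeta n lam (ndist n lam + 1 - 1)"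
        using Z col_len_anti[of 1] by (metis add_diff_cancel_right' le_trans less_imp_le)
      show "zeta n lam (ndist n lam + 1) \<le> n" using Z by simp
      show "greedy n lam T (j, i) p" using A by simp
      show "\<forall>q. greedy n lam T (1, 1) q \<longrightarrow> blk (zeta n lam (ndist n lam + 1 - 1)) (zeta n lam (ndist n lam + 1)) q"
      proof (intro allI impI)
        fix q assume g: "greedy n lam T (1, 1) q"
        then have "q = pi0 n lam T" by (cases rule: greedy.cases) auto
        then show "blk (zeta n lam (ndist n lam + 1 - 1)) (zeta n lam (ndist n lam + 1)) q"
          using pi0_props(2)[OF P S] Z unfolding blk_def by auto
      qed
    qed
  qed
  moreover fix a b assume "zeta n lam (h-1) + 1 \<le> a" "a < b" "b \<le> zeta n lam h"
  ultimately show "p a < p b" unfolding blk_def by blast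
qed

end
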